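(* Let $K\subset\mathbb{R}^n$ be a convex set, $\sigma>0$, $Y=\mu+\xi$ with $\mu\in K$ and $\xi\sim N(0,\sigma^2\mathbb{I}_n)$, and let $c>0$ be the fixed (sufficiently large) constant in the definition of $M^{\operatorname{loc}}$. Then for any $\varepsilon>0$ satisfying $\log M^{\operatorname{loc}}(\varepsilon)>4\big(\varepsilon^2/(2\sigma^2)\vee\log 2\big)$, $$\inf_{\hat\nu}\sup_{\mu\in K}\mathbb{E}_\mu\|\hat\nu(Y)-\mu\|^2\ge\frac{\varepsilon^2}{8c^2},$$ the infimum being over all Borel measurable $\hat\nu:\mathbb{R}^n\to\mathbb{R}^n$.
   Context: $\|\cdot\|$ is the Euclidean norm, $B(\theta,r)$ the closed Euclidean ball, $a\vee b=\max(a,b)$. $M(\delta,S)$ is the largest cardinality of a $\delta$-packing of $S$ (distinct points at mutual distance $\ge\delta$); $M^{\operatorname{loc}}(\varepsilon)=\sup_{\theta\in K}M(\varepsilon/c,B(\theta,\varepsilon)\cap K)$. *)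

theory Defs
  imports "HOL-Probability.Probability"
begin

definition packing :: "real \<Rightarrow> 'a::metric_space set \<Rightarrow> 'a set \<Rightarrow> bool" where
  "packing \<delta> S P \<longleftrightarrow> P \<subseteq> S \<and> finite P \<and> (\<forall>x\<in>P. \<forall>y\<in>P. x \<noteq> y \<longrightarrow> dist x y \<ge> \<delta>)"

definition packing_number :: "real \<Rightarrow> 'a::metric_space set \<Rightarrow> nat" where
  "packing_number \<delta> S = Sup (card ` {P. packing \<delta> S P})"

definition local_packing :: "real \<Rightarrow> 'a::metric_space set \<Rightarrow> real \<Rightarrow> nat" where
  "local_packing c K \<epsilon> = Sup ((\<lambda>\<theta>. packing_number (\<epsilon> / c) (cball \<theta> \<epsilon> \<inter> K)) ` K)"

definition gaussian :: "'a::euclidean_space \<Rightarrow> real \<Rightarrow> 'a measure" where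
  "gaussian \<mu> \<sigma> = density lborel (\<lambda>y. ennreal ((2 * pi * \<sigma>\<^sup>2) powr (- real DIM('a) / 2)
       * exp (- (norm (y - \<mu>))\<^sup>2 / (2 * \<sigma>\<^sup>2))))"

end

theory Submission
  imports Defs
begin


definition gd :: "'a::euclidean_space \<Rightarrow> real \<Rightarrow> 'a \<Rightarrow> real" where
  "gd m \<sigma> y = (2 * pi * \<sigma>\<^sup>2) powr (- real DIM('a) / 2) * exp (- (norm (y - m))\<^sup>2 / (2 * \<sigma>\<^sup>2))"

lemma gaussian_gd: "gaussian m \<sigma> = density lborel (\<lambda>y. ennreal (gd m \<sigma> y))"
  unfolding gaussian_def gd_def by simp

lemma gd_pos: "\<sigma> > 0 \<Longrightarrow> gd m \<sigma> y > 0"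
  unfolding gd_def by (simp add: pi_gt_zero)

lemma gd_meas[measurable]: "gd m \<sigma> \<in> borel_measurable borel"
  unfolding gd_def by measurable

lemma gd_prod:
  fixes m y :: "'a::euclidean_space"
  assumes "\<sigma> > 0"
  shows "gd m \<sigma> y = (\<Prod>b\<in>Basis. normal_density (m\<bullet>b) \<sigma> (y\<bullet>b))"
proof -
  have n2: "(norm (y - m))\<^sup>2 = (\<Sum>b\<in>Basis. (y\<bullet>b - m\<bullet>b)\<^sup>2)"
  proof -
    have "(norm (y - m))\<^sup>2 = inner (y - m) (y - m)" by (simp add: power2_norm_eq_inner)
    also have "\<dots> = (\<Sum>b\<in>Basis. inner (y - m) b * inner (y - m) b)" by (rule euclidean_inner)
    finally show ?thesis by (simp add: inner_diff_left power2_eq_square)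
  qed
  have pos: "2 * pi * \<sigma>\<^sup>2 > 0" using assms by (simp add: pi_gt_zero)
  have c: "(2 * pi * \<sigma>\<^sup>2) powr (- real DIM('a) / 2) = (1 / sqrt (2 * pi * \<sigma>\<^sup>2)) ^ DIM('a)"
  proof -
    have "1 / sqrt (2 * pi * \<sigma>\<^sup>2) = (2 * pi * \<sigma>\<^sup>2) powr (-1/2)"
      using pos by (simp add: powr_half_sqrt[symmetric] powr_minus_divide)
    then have "(1 / sqrt (2 * pi * \<sigma>\<^sup>2)) ^ DIM('a) = ((2 * pi * \<sigma>\<^sup>2) powr (-1/2)) powr real DIM('a)"
      using pos by (subst powr_realpow) auto
    also have "\<dots> = (2 * pi * \<sigma>\<^sup>2) powr (- real DIM('a) / 2)" by (simp add: powr_powr)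
    finally show ?thesis by simp
  qed
  have e: "exp (- (norm (y - m))\<^sup>2 / (2 * \<sigma>\<^sup>2)) = (\<Prod>b\<in>Basis. exp (-(y\<bullet>b - m\<bullet>b)\<^sup>2 / (2 * \<sigma>\<^sup>2)))"
    by (simp add: n2 exp_sum[symmetric] sum_negf sum_divide_distrib)
  show ?thesis unfolding gd_def c e normal_density_def prod.distrib prod_constant by simp
qed

lemma nn_integral_gd:
  fixes m :: "'a::euclidean_space"
  assumes "\<sigma> > 0"
  shows "(\<integral>\<^sup>+ y. ennreal (gd m \<sigma> y) \<partial>lborel) = 1"
proof -
  have "(\<integral>\<^sup>+ y. ennreal (gd m \<sigma> y) \<partial>lborel) = (\<integral>\<^sup>+ y. (\<Prod>b\<in>Basis. ennreal (normal_density (m\<bullet>b) \<sigma> (y\<bullet>b))) \<partial>lborel)"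
    by (simp add: gd_prod[OF assms] prod_ennreal)
  also have "\<dots> = (\<Prod>b\<in>Basis. (\<integral>\<^sup>+ x. ennreal (normal_density (m\<bullet>b) \<sigma> x) \<partial>lborel))"
    by (rule nn_integral_lborel_prod) (auto simp: assms)
  also have "\<dots> = 1"
  proof (rule prod.neutral, intro ballI)
    fix b :: 'a
    interpret prob_space "density lborel (normal_density (m\<bullet>b) \<sigma>)" using prob_space_normal_density assms by blast
    show "(\<integral>\<^sup>+ x. ennreal (normal_density (m\<bullet>b) \<sigma> x) \<partial>lborel) = 1"
      proof -
      have "emeasure (density lborel (normal_density (m\<bullet>b) \<sigma>)) UNIV = 1" using emeasure_space_1 by simp
      then show ?thesis by (subst (asm) emeasure_density) auto
    qed
  qed
  finally show ?thesis .
qed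

lemma prob_space_gaussian:
  fixes m :: "'a::euclidean_space"
  assumes "\<sigma> > 0"
  shows "prob_space (gaussian m \<sigma>)"
  by (rule prob_spaceI) (simp add: gaussian_gd emeasure_density[of _ _ UNIV, simplified] nn_integral_gd[OF assms])

lemma gd_sq:
  fixes p \<theta> y :: "'a::euclidean_space"
  assumes "\<sigma> > 0"
  shows "(gd p \<sigma> y)\<^sup>2 = gd \<theta> \<sigma> y * gd (2 *\<^sub>R p - \<theta>) \<sigma> y * exp ((norm (p - \<theta>))\<^sup>2 / \<sigma>\<^sup>2)"
proof -
  have par: "(norm (y - \<theta>))\<^sup>2 + (norm (y - (2 *\<^sub>R p - \<theta>)))\<^sup>2 = 2 * (norm (y - p))\<^sup>2 + 2 * (norm (p - \<theta>))\<^sup>2"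
  proof -
    have a: "y - \<theta> = (y - p) + (p - \<theta>)" by simp
    have b: "y - (2 *\<^sub>R p - \<theta>) = (y - p) - (p - \<theta>)" by (simp add: scaleR_2 algebra_simps)
    show ?thesis unfolding a b power2_norm_eq_inner
      by (simp add: inner_add_left inner_add_right inner_diff_left inner_diff_right inner_commute)
  qed
  have s: "\<sigma>\<^sup>2 > 0" using assms by simp
  have "exp (- (norm (y - p))\<^sup>2 / (2 * \<sigma>\<^sup>2)) ^ 2 =
        exp (- (norm (y - \<theta>))\<^sup>2 / (2 * \<sigma>\<^sup>2)) * exp (- (norm (y - (2 *\<^sub>R p - \<theta>)))\<^sup>2 / (2 * \<sigma>\<^sup>2)) * exp ((norm (p - \<theta>))\<^sup>2 / \<sigma>\<^sup>2)"
  proof -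
    have "- (norm (y - p))\<^sup>2 / (2 * \<sigma>\<^sup>2) * 2 = - (norm (y - \<theta>))\<^sup>2 / (2 * \<sigma>\<^sup>2) + - (norm (y - (2 *\<^sub>R p - \<theta>)))\<^sup>2 / (2 * \<sigma>\<^sup>2) + (norm (p - \<theta>))\<^sup>2 / \<sigma>\<^sup>2"
      using s par by (simp add: field_simps)
    then show ?thesis by (simp add: exp_add[symmetric] power2_eq_square exp_add[of _ _, symmetric] flip: exp_add)
  qed
  then show ?thesis unfolding gd_def by (simp add: power_mult_distrib power2_eq_square)
qed



lemma amgm_aux:
  fixes x z w E t :: real
  assumes "x > 0" "t > 0" "z\<^sup>2 = x * w * E"
  shows "z \<le> t / 2 * x + E / (2 * t) * w"
proof -
  have "2 * t * x * z \<le> t\<^sup>2 * x\<^sup>2 + z\<^sup>2"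
    using sum_squares_ge_zero[of "t*x - z" 0] by (simp add: power2_eq_square algebra_simps)
  also have "\<dots> = (2 * t * x) * (t / 2 * x + E / (2 * t) * w)"
    using assms by (simp add: field_simps power2_eq_square)
  finally show ?thesis using assms by (simp add: mult_le_cancel_left_pos)
qed

lemma change_measure:
  fixes p \<theta> :: "'a::euclidean_space"
  assumes "\<sigma> > 0" "t > 0" and A: "A \<in> sets borel"
  shows "measure (gaussian p \<sigma>) A \<le> t / 2 * measure (gaussian \<theta> \<sigma>) A + exp ((norm (p - \<theta>))\<^sup>2 / \<sigma>\<^sup>2) / (2 * t)"
proof -
  define E where "E = exp ((norm (p - \<theta>))\<^sup>2 / \<sigma>\<^sup>2)"
  define q where "q = 2 *\<^sub>R p - \<theta>"
  interpret Gp: prob_space "gaussian p \<sigma>" by (rule prob_space_gaussian[OF assms(1)])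
  interpret Gt: prob_space "gaussian \<theta> \<sigma>" by (rule prob_space_gaussian[OF assms(1)])
  interpret Gq: prob_space "gaussian q \<sigma>" by (rule prob_space_gaussian[OF assms(1)])
  have [measurable]: "A \<in> sets lborel" using A by simp
  have pw: "gd p \<sigma> y \<le> t / 2 * gd \<theta> \<sigma> y + E / (2 * t) * gd q \<sigma> y" for y
    by (rule amgm_aux[OF gd_pos[OF assms(1)] assms(2)]) (simp add: gd_sq[OF assms(1), of p y \<theta>] E_def q_def)
  have "ennreal (measure (gaussian p \<sigma>) A) = emeasure (gaussian p \<sigma>) A"
    by (simp add: Gp.emeasure_eq_measure)
  also have "\<dots> = (\<integral>\<^sup>+ y. ennreal (gd p \<sigma> y) * indicator A y \<partial>lborel)"
    unfolding gaussian_gd by (rule emeasure_density) (auto simp: A)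
  also have "\<dots> \<le> (\<integral>\<^sup>+ y. ennreal (t / 2) * (ennreal (gd \<theta> \<sigma> y) * indicator A y)
                         + ennreal (E / (2 * t)) * (ennreal (gd q \<sigma> y) * indicator A y) \<partial>lborel)"
  proof (rule nn_integral_mono)
    fix y
    have "ennreal (gd p \<sigma> y) \<le> ennreal (t / 2) * ennreal (gd \<theta> \<sigma> y) + ennreal (E / (2 * t)) * ennreal (gd q \<sigma> y)"
      using pw[of y] assms gd_pos[OF assms(1), of \<theta> y] gd_pos[OF assms(1), of q y]
      by (simp add: ennreal_mult'[symmetric] ennreal_plus[symmetric] E_def del: ennreal_plus)
    then show "ennreal (gd p \<sigma> y) * indicator A y \<le> ennreal (t / 2) * (ennreal (gd \<theta> \<sigma> y) * indicator A y)
                         + ennreal (E / (2 * t)) * (ennreal (gd q \<sigma> y) * indicator A y)"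
      by (cases "y \<in> A") (auto simp: indicator_def)
  qed
  also have "\<dots> = ennreal (t / 2) * emeasure (gaussian \<theta> \<sigma>) A + ennreal (E / (2 * t)) * emeasure (gaussian q \<sigma>) A"
  proof -
    have "emeasure (gaussian x \<sigma>) A = (\<integral>\<^sup>+ y. ennreal (gd x \<sigma> y) * indicator A y \<partial>lborel)" for x :: 'a
      unfolding gaussian_gd by (rule emeasure_density) (auto simp: A)
    then show ?thesis by (simp add: nn_integral_add nn_integral_cmult)
  qed
  also have "\<dots> \<le> ennreal (t / 2) * ennreal (measure (gaussian \<theta> \<sigma>) A) + ennreal (E / (2 * t)) * 1"
    by (intro add_mono mult_left_mono) (auto simp: Gt.emeasure_eq_measure Gq.emeasure_le_1)
  also have "\<dots> = ennreal (t / 2 * measure (gaussian \<theta> \<sigma>) A + E / (2 * t))"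
    using assms by (simp add: ennreal_mult'[symmetric] ennreal_plus[symmetric] E_def del: ennreal_plus)
  finally show ?thesis
    using assms by (subst (asm) ennreal_le_iff) (auto simp: E_def intro!: add_nonneg_nonneg)
qed



lemma space_gaussian[simp]: "space (gaussian m \<sigma>) = UNIV"
  by (simp add: gaussian_def)

lemma sets_gaussian[simp]: "sets (gaussian m \<sigma>) = sets borel"
  by (simp add: gaussian_def)

lemma numeric_aux:
  fixes m k E :: real
  assumes "m > 0" "k \<ge> 0" "E \<le> exp (2 * k)" "ln m > 4 * k" "ln m > 4 * ln 2" "q \<le> 1 / m" "q \<ge> 0"
  shows "exp (ln m / 2 + k) / 2 * q + E / (2 * exp (ln m / 2 + k)) \<le> 1 / 2"
proof -
  have m: "m = exp (ln m)" using assms by simp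
  have "exp (ln m / 2 + k) / 2 * q \<le> exp (ln m / 2 + k) / 2 * (1 / m)"
    using assms by (intro mult_left_mono) auto
  also have "\<dots> = exp (k - ln m / 2) / 2"
    by (subst (2) m) (simp add: exp_diff exp_add field_simps flip: exp_add)
  finally have a: "exp (ln m / 2 + k) / 2 * q \<le> exp (k - ln m / 2) / 2" .
  have "E / (2 * exp (ln m / 2 + k)) \<le> exp (2 * k) / (2 * exp (ln m / 2 + k))"
    using assms by (intro divide_right_mono) auto
  also have "\<dots> = exp (k - ln m / 2) / 2"
    by (simp add: exp_diff[symmetric] field_simps flip: exp_add)
  finally have b: "E / (2 * exp (ln m / 2 + k)) \<le> exp (k - ln m / 2) / 2" .
  have "exp (k - ln m / 2) \<le> exp (- ln 2)" using assms by simp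
  also have "\<dots> = 1 / 2" by (simp add: exp_minus)
  finally show ?thesis using a b by linarith
qed

lemma risk_lower:
  fixes \<theta> :: "'a::euclidean_space" and P :: "'a set" and \<nu> :: "'a \<Rightarrow> 'a"
  assumes \<sigma>: "\<sigma> > 0" and \<delta>: "\<delta> > 0" and fin: "finite P" and Pb: "P \<subseteq> cball \<theta> \<epsilon>"
    and sep: "\<forall>x\<in>P. \<forall>y\<in>P. x \<noteq> y \<longrightarrow> dist x y \<ge> \<delta>"
    and lnm: "ln (real (card P)) > 4 * max (\<epsilon>\<^sup>2 / (2 * \<sigma>\<^sup>2)) (ln 2)"
    and \<nu>[measurable]: "\<nu> \<in> borel_measurable borel"
  shows "\<exists>p\<in>P. (\<integral>\<^sup>+ y. ennreal ((norm (\<nu> y - p))\<^sup>2) \<partial>(gaussian p \<sigma>)) \<ge> ennreal (\<delta>\<^sup>2 / 8)"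
proof -
  define m where "m = real (card P)"
  define k where "k = \<epsilon>\<^sup>2 / (2 * \<sigma>\<^sup>2)"
  define A where "A p = {y. norm (\<nu> y - p) < \<delta> / 2}" for p
  have k0: "k \<ge> 0" unfolding k_def by simp
  have lnm': "ln m > 4 * k" "ln m > 4 * ln 2" using lnm unfolding m_def k_def by auto
  have m0: "m > 0" proof -
    have "m \<noteq> 0"
    proof
      assume "m = 0"
      then have "ln m = 0" by simp
      moreover have "ln (2::real) > 0" by simp
      ultimately show False using lnm'(2) by linarith
    qed
    then show ?thesis unfolding m_def by simp
  qed
  have Pne: "P \<noteq> {}" using m0 m_def by auto
  have Ameas[measurable]: "A p \<in> sets borel" for p
    unfolding A_def by measurable
  have disj: "disjoint_family_on A P"
  proof (unfold disjoint_family_on_def, intro ballI impI)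
    fix p q assume pq: "p \<in> P" "q \<in> P" "p \<noteq> q"
    show "A p \<inter> A q = {}"
    proof (rule ccontr)
      assume "A p \<inter> A q \<noteq> {}"
      then obtain y where "norm (\<nu> y - p) < \<delta> / 2" "norm (\<nu> y - q) < \<delta> / 2" unfolding A_def by auto
      then have "dist p q < \<delta>" using norm_triangle_ineq4[of "\<nu> y - q" "\<nu> y - p"]
        by (simp add: dist_norm norm_minus_commute)
      with sep pq show False by force
    qed
  qed
  interpret Gt: prob_space "gaussian \<theta> \<sigma>" by (rule prob_space_gaussian[OF \<sigma>])
  have "(\<Sum>p\<in>P. measure (gaussian \<theta> \<sigma>) (A p)) = measure (gaussian \<theta> \<sigma>) (\<Union>p\<in>P. A p)"
    by (rule Gt.finite_measure_finite_Union[symmetric]) (use fin disj in auto)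
  also have "\<dots> \<le> 1" by (rule Gt.prob_le_1)
  finally have sum1: "(\<Sum>p\<in>P. measure (gaussian \<theta> \<sigma>) (A p)) \<le> 1" .
  have "\<exists>p\<in>P. measure (gaussian \<theta> \<sigma>) (A p) \<le> 1 / m"
  proof (rule ccontr)
    assume "\<not> ?thesis"
    then have "\<forall>p\<in>P. 1 / m < measure (gaussian \<theta> \<sigma>) (A p)" by force
    then have "(\<Sum>p\<in>P. 1 / m) < (\<Sum>p\<in>P. measure (gaussian \<theta> \<sigma>) (A p))"
      by (intro sum_strict_mono fin Pne) auto
    moreover have "(\<Sum>p\<in>P. 1 / m) = 1" using m0 by (simp add: m_def)
    ultimately show False using sum1 by simp
  qed
  then obtain p where pP: "p \<in> P" and pA: "measure (gaussian \<theta> \<sigma>) (A p) \<le> 1 / m" by blast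
  interpret Gp: prob_space "gaussian p \<sigma>" by (rule prob_space_gaussian[OF \<sigma>])
  define t where "t = exp (ln m / 2 + k)"
  have "measure (gaussian p \<sigma>) (A p) \<le> t / 2 * measure (gaussian \<theta> \<sigma>) (A p) + exp ((norm (p - \<theta>))\<^sup>2 / \<sigma>\<^sup>2) / (2 * t)"
    by (rule change_measure) (auto simp: t_def \<sigma>)
  also have "\<dots> \<le> 1 / 2"
    unfolding t_def
  proof (rule numeric_aux[OF m0 k0 _ lnm' pA])
    have "norm (p - \<theta>) \<le> \<epsilon>" using Pb pP by (auto simp: dist_norm norm_minus_commute)
    then have "(norm (p - \<theta>))\<^sup>2 \<le> \<epsilon>\<^sup>2" by (intro power_mono) auto
    then have "(norm (p - \<theta>))\<^sup>2 / \<sigma>\<^sup>2 \<le> 2 * k" using \<sigma> unfolding k_def by (simp add: divide_right_mono)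
    then show "exp ((norm (p - \<theta>))\<^sup>2 / \<sigma>\<^sup>2) \<le> exp (2 * k)" by simp
  qed auto
  finally have pAp: "measure (gaussian p \<sigma>) (A p) \<le> 1 / 2" .
  have "ennreal (\<delta>\<^sup>2 / 8) \<le> ennreal ((\<delta> / 2)\<^sup>2 * (1 - measure (gaussian p \<sigma>) (A p)))"
  proof (intro ennreal_leI)
    have "(\<delta> / 2)\<^sup>2 * (1 / 2) \<le> (\<delta> / 2)\<^sup>2 * (1 - measure (gaussian p \<sigma>) (A p))"
      using pAp by (intro mult_left_mono) auto
    then show "\<delta>\<^sup>2 / 8 \<le> (\<delta> / 2)\<^sup>2 * (1 - measure (gaussian p \<sigma>) (A p))"
      by (simp add: power2_eq_square)
  qed
  also have "\<dots> = ennreal ((\<delta> / 2)\<^sup>2) * emeasure (gaussian p \<sigma>) (UNIV - A p)"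
    using Gp.prob_compl[of "A p"] by (simp add: Gp.emeasure_eq_measure ennreal_mult)
  also have "\<dots> = (\<integral>\<^sup>+ y. ennreal ((\<delta> / 2)\<^sup>2) * indicator (UNIV - A p) y \<partial>(gaussian p \<sigma>))"
    by (rule nn_integral_cmult_indicator[symmetric]) simp
  also have "\<dots> \<le> (\<integral>\<^sup>+ y. ennreal ((norm (\<nu> y - p))\<^sup>2) \<partial>(gaussian p \<sigma>))"
  proof (rule nn_integral_mono)
    fix y
    show "ennreal ((\<delta> / 2)\<^sup>2) * indicator (UNIV - A p) y \<le> ennreal ((norm (\<nu> y - p))\<^sup>2)"
    proof (cases "y \<in> A p")
      case False
      then have "\<delta> / 2 \<le> norm (\<nu> y - p)" unfolding A_def by auto
      then have "(\<delta> / 2)\<^sup>2 \<le> (norm (\<nu> y - p))\<^sup>2" using \<delta> by (intro power_mono) auto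
      then show ?thesis using False by (simp add: ennreal_leI)
    qed simp
  qed
  finally show ?thesis using pP by blast
qed



lemma packing_bound:
  fixes \<delta> r :: real
  assumes \<delta>: "\<delta> > 0"
  shows "\<exists>N. \<forall>(\<theta>::'a::euclidean_space) S P. S \<subseteq> cball \<theta> r \<longrightarrow> packing \<delta> S P \<longrightarrow> card P \<le> N"
proof -
  define s where "s = \<delta> / real DIM('a)"
  have s: "s > 0" using \<delta> by (simp add: s_def)
  define N0 where "N0 = \<lceil>r / s\<rceil>"
  define B where "B = PiE (Basis::'a set) (\<lambda>_. {-N0..N0})"
  have finB: "finite B" unfolding B_def by (intro finite_PiE) auto
  show ?thesis
  proof (intro exI allI impI)
    fix \<theta> :: 'a and S P
    assume SC: "S \<subseteq> cball \<theta> r" and pk: "packing \<delta> S P"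
    have PS: "P \<subseteq> S" and finP: "finite P" and sep: "\<forall>x\<in>P. \<forall>y\<in>P. x \<noteq> y \<longrightarrow> dist x y \<ge> \<delta>"
      using pk unfolding packing_def by auto
    define f where "f p = restrict (\<lambda>b. \<lfloor>((p - \<theta>) \<bullet> b) / s\<rfloor>) Basis" for p
    have fB: "f ` P \<subseteq> B"
    proof
      fix z assume "z \<in> f ` P"
      then obtain p where pP: "p \<in> P" and z: "z = f p" by auto
      have nr: "norm (p - \<theta>) \<le> r" using pP PS SC by (auto simp: dist_norm norm_minus_commute)
      have "\<lfloor>((p - \<theta>) \<bullet> b) / s\<rfloor> \<in> {-N0..N0}" if b: "b \<in> Basis" for b
      proof -
        have "\<bar>(p - \<theta>) \<bullet> b\<bar> \<le> r" using Basis_le_norm[OF b, of "p - \<theta>"] nr by linarith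
        then have "-r / s \<le> ((p - \<theta>) \<bullet> b) / s" "((p - \<theta>) \<bullet> b) / s \<le> r / s"
          using s by (auto simp: divide_right_mono abs_le_iff field_simps)
        then have "\<lfloor>((p - \<theta>) \<bullet> b) / s\<rfloor> \<ge> \<lfloor>-r / s\<rfloor> \<and> \<lfloor>((p - \<theta>) \<bullet> b) / s\<rfloor> \<le> N0"
        proof -
          assume h: "-r / s \<le> ((p - \<theta>) \<bullet> b) / s" "((p - \<theta>) \<bullet> b) / s \<le> r / s"
          have "\<lfloor>((p - \<theta>) \<bullet> b) / s\<rfloor> \<ge> \<lfloor>-r / s\<rfloor>" using h(1) by (rule floor_mono)
          have "of_int \<lfloor>((p - \<theta>) \<bullet> b) / s\<rfloor> \<le> r / s" using h(2) of_int_floor_le[of "((p - \<theta>) \<bullet> b) / s"] by linarith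
          also have "\<dots> \<le> of_int N0" unfolding N0_def by (rule le_of_int_ceiling)
          finally have "\<lfloor>((p - \<theta>) \<bullet> b) / s\<rfloor> \<le> N0" by linarith
          with \<open>\<lfloor>((p - \<theta>) \<bullet> b) / s\<rfloor> \<ge> \<lfloor>-r / s\<rfloor>\<close> show ?thesis by simp
        qed
        moreover have "\<lfloor>-r / s\<rfloor> = - N0" unfolding N0_def by (simp add: ceiling_def)
        ultimately show ?thesis by auto
      qed
      then show "z \<in> B" unfolding z f_def B_def by auto
    qed
    have inj: "inj_on f P"
    proof (rule inj_onI, rule ccontr)
      fix p q assume pP: "p \<in> P" and qP: "q \<in> P" and fe: "f p = f q" and ne: "p \<noteq> q"
      have lt: "\<bar>(p - q) \<bullet> b\<bar> < s" if b: "b \<in> Basis" for b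
      proof -
        have "\<lfloor>((p - \<theta>) \<bullet> b) / s\<rfloor> = \<lfloor>((q - \<theta>) \<bullet> b) / s\<rfloor>"
          using fun_cong[OF fe, of b] b by (simp add: f_def)
        note that' = this
        have "\<bar>((p - \<theta>) \<bullet> b) / s - ((q - \<theta>) \<bullet> b) / s\<bar> < 1"
          proof -
          let ?x = "((p - \<theta>) \<bullet> b) / s" and ?y = "((q - \<theta>) \<bullet> b) / s"
          have "of_int \<lfloor>?x\<rfloor> \<le> ?x" "?x < of_int \<lfloor>?x\<rfloor> + 1"
               "of_int \<lfloor>?y\<rfloor> \<le> ?y" "?y < of_int \<lfloor>?y\<rfloor> + 1"
            by (simp_all add: of_int_floor_le real_of_int_floor_add_one_gt)
          with that' show ?thesis by linarith
        qed
        then have "\<bar>((p - \<theta>) \<bullet> b) - ((q - \<theta>) \<bullet> b)\<bar> < s"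
          using s by (simp add: diff_divide_distrib[symmetric] abs_divide)
        then show ?thesis by (simp add: inner_diff_left)
      qed
      have "norm (p - q) \<le> (\<Sum>b\<in>Basis. \<bar>(p - q) \<bullet> b\<bar>)" by (rule norm_le_l1)
      also have "\<dots> < (\<Sum>b\<in>(Basis::'a set). s)"
        by (rule sum_strict_mono) (auto simp: lt)
      also have "\<dots> = \<delta>" using s by (simp add: s_def)
      finally have "dist p q < \<delta>" by (simp add: dist_norm)
      with sep pP qP ne show False by force
    qed
    have "card P = card (f ` P)" using inj by (simp add: card_image)
    also have "\<dots> \<le> card B" by (rule card_mono[OF finB fB])
    finally show "card P \<le> card B" .
  qed
qed



lemma Sup_nat_attained:
  fixes X :: "nat set"
  assumes "X \<noteq> {}" "X \<subseteq> {0..N}"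
  shows "Sup X \<in> X" "Sup X \<le> N"
proof -
  have fin: "finite X" using assms(2) finite_subset by blast
  have "Sup X = Max X" using assms(1) by (simp add: Sup_nat_def)
  then show "Sup X \<in> X" "Sup X \<le> N" using fin assms Max_in[OF fin assms(1)] by auto
qed

theorem mainTheorem4:
  fixes K :: "'a::euclidean_space set" and \<sigma> c \<epsilon> :: real
  assumes "convex K" and "\<sigma> > 0" and "c > 0" and "\<epsilon> > 0"
    and "ln (real (local_packing c K \<epsilon>)) > 4 * max (\<epsilon>\<^sup>2 / (2 * \<sigma>\<^sup>2)) (ln 2)"
  shows "(INF \<nu>\<in>borel_measurable (borel :: 'a measure).
            SUP \<mu>\<in>K. \<integral>\<^sup>+ y. ennreal ((norm (\<nu> y - \<mu>))\<^sup>2) \<partial>(gaussian \<mu> \<sigma>))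
         \<ge> ennreal (\<epsilon>\<^sup>2 / (8 * c\<^sup>2))"
proof -
  define \<delta> where "\<delta> = \<epsilon> / c"
  have \<delta>: "\<delta> > 0" using assms by (simp add: \<delta>_def)
  obtain N where N: "\<And>(\<theta>::'a) S P. S \<subseteq> cball \<theta> \<epsilon> \<Longrightarrow> packing \<delta> S P \<Longrightarrow> card P \<le> N"
    using packing_bound[OF \<delta>, of \<epsilon>] by blast
  define pn where "pn \<theta> = packing_number \<delta> (cball \<theta> \<epsilon> \<inter> K)" for \<theta>
  have pn: "pn \<theta> \<le> N \<and> (\<exists>P. packing \<delta> (cball \<theta> \<epsilon> \<inter> K) P \<and> card P = pn \<theta>)" for \<theta>
  proof -
    let ?X = "card ` {P. packing \<delta> (cball \<theta> \<epsilon> \<inter> K) P}"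
    have "packing \<delta> (cball \<theta> \<epsilon> \<inter> K) {}" by (simp add: packing_def)
    then have ne: "?X \<noteq> {}" by blast
    have sub: "?X \<subseteq> {0..N}" using N[of "cball \<theta> \<epsilon> \<inter> K" \<theta>] by auto
    show ?thesis using Sup_nat_attained[OF ne sub] unfolding pn_def packing_number_def by auto
  qed
  have L: "local_packing c K \<epsilon> = Sup (pn ` K)"
    unfolding local_packing_def pn_def \<delta>_def ..
  have Kne: "K \<noteq> {}"
  proof
    assume "K = {}"
    then have "local_packing c K \<epsilon> = 0" unfolding L by simp
    moreover have "ln (2::real) > 0" by simp
    ultimately show False using assms(5) by auto
  qed
  have "Sup (pn ` K) \<in> pn ` K"
    by (rule Sup_nat_attained(1)[of _ N]) (use Kne pn in auto)
  then obtain \<theta> where \<theta>K: "\<theta> \<in> K" and Lt: "local_packing c K \<epsilon> = pn \<theta>" unfolding L by auto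
  obtain P where pk: "packing \<delta> (cball \<theta> \<epsilon> \<inter> K) P" and cP: "card P = pn \<theta>" using pn by blast
  have PK: "P \<subseteq> K" and Pb: "P \<subseteq> cball \<theta> \<epsilon>" and finP: "finite P"
    and sep: "\<forall>x\<in>P. \<forall>y\<in>P. x \<noteq> y \<longrightarrow> dist x y \<ge> \<delta>"
    using pk unfolding packing_def by auto
  have lnP: "ln (real (card P)) > 4 * max (\<epsilon>\<^sup>2 / (2 * \<sigma>\<^sup>2)) (ln 2)"
    using assms(5) Lt cP by simp
  have eq: "\<delta>\<^sup>2 / 8 = \<epsilon>\<^sup>2 / (8 * c\<^sup>2)" unfolding \<delta>_def by (simp add: power_divide)
  show ?thesis
  proof (rule INF_greatest)
    fix \<nu> :: "'a \<Rightarrow> 'a" assume \<nu>: "\<nu> \<in> borel_measurable borel"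
    obtain p where pP: "p \<in> P" and
      r: "(\<integral>\<^sup>+ y. ennreal ((norm (\<nu> y - p))\<^sup>2) \<partial>(gaussian p \<sigma>)) \<ge> ennreal (\<delta>\<^sup>2 / 8)"
      using risk_lower[OF assms(2) \<delta> finP Pb sep lnP \<nu>] by blast
    show "ennreal (\<epsilon>\<^sup>2 / (8 * c\<^sup>2)) \<le> (SUP \<mu>\<in>K. \<integral>\<^sup>+ y. ennreal ((norm (\<nu> y - \<mu>))\<^sup>2) \<partial>(gaussian \<mu> \<sigma>))"
      using r pP PK eq by (auto intro: SUP_upper2)
  qed
qed


end
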